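(* In the setting of the context, let $(S,E,I,R)$ be the functions defined there and set $\hat S(u)=S(\varphi(u))$, $\hat E(u)=E(\varphi(u))$, $\hat I(u)=I(\varphi(u))$, $\hat R(u)=R(\varphi(u))$ for $u\in(u_\infty,u_0]$. Then for $u\in(u_\infty,u_0)$ \[ \frac{d\hat S}{du}=\frac{\hat S(u)}{u},\quad \frac{d\hat E}{du}-\frac{\delta}{u\psi(u)}\hat E(u)=-\frac{\hat S(u)}{u},\quad \frac{d\hat I}{du}-\frac{\gamma}{\beta}\frac1u=-\frac{\delta}{u\psi(u)}\hat E(u),\quad \frac{d\hat R}{du}=-\frac{\gamma}{\beta}\frac1u, \] and $\hat S(u_0)=\tilde S$, $\hat E(u_0)=\tilde E$, $\hat I(u_0)=\tilde I$, $\hat R(u_0)=\tilde R$.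
   Context: Let $\beta,\gamma,\delta>0$ be constants and $\tilde S,\tilde E,\tilde I,\tilde R$ real numbers with $N:=\tilde S+\tilde E+\tilde I+\tilde R>0$. Standing assumptions: (A1) $\tilde I>0$; (A2) $\tilde E>(\gamma/\delta)\tilde I$; (A3) $\tilde S>\delta\tilde E/(\beta\tilde I)$; (A4) $\tilde R\ge 0$ and $N>\tilde S e^{(\beta/\gamma)\tilde R}+\tilde R$. Let $\alpha$ be the unique solution in $(\tilde R,N)$ of $x=N-\tilde S e^{(\beta/\gamma)\tilde R}e^{-(\beta/\gamma)x}$, and assume (A5) $\tilde S<(\gamma/\beta)e^{(\beta/\gamma)(\alpha-\tilde R)}$. Put $u_0:=e^{-(\beta/\gamma)\tilde R}$, $u_\infty:=e^{-(\beta/\gamma)\alpha}$. Let $\psi$ be the unique function, continuous and positive on $(u_\infty,u_0]$ and $C^1$ on $(u_\infty,u_0)$, satisfying $\psi'(u)\psi(u)-\frac{\gamma+\delta}{u}\psi(u)=-\delta\,\frac{\beta N-\beta\tilde S e^{(\beta/\gamma)\tilde R}u+\gamma\log u}{u}$ on $(u_\infty,u_0)$ and $\psi(u_0)=\beta\tilde I$. Let $\varphi(u):=\int_u^{u_0}\frac{d\xi}{\xi\psi(\xi)}$; $\varphi$ is a strictly decreasing continuous bijection from $(u_\infty,u_0]$ onto $[0,\infty)$, $C^1$ on $(u_\infty,u_0)$, with inverse $\varphi^{-1}:[0,\infty)\to(u_\infty,u_0]$. For $t\ge 0$ define $S(t)=\tilde S e^{(\beta/\gamma)\tilde R}\varphi^{-1}(t)$,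 $E(t)=\tilde E e^{-\delta t}+\tilde S e^{(\beta/\gamma)\tilde R}e^{-\delta t}\int_{\varphi^{-1}(t)}^{u_0}e^{\delta\varphi(v)}dv$, $I(t)=N-\tilde S e^{(\beta/\gamma)\tilde R}\varphi^{-1}(t)+\frac{\gamma}{\beta}\log\varphi^{-1}(t)-E(t)$, $R(t)=-\frac{\gamma}{\beta}\log\varphi^{-1}(t)$; this $(S,E,I,R)$ solves $S'=-\beta SI$, $E'=\beta SI-\delta E$, $I'=\delta E-\gamma I$, $R'=\gamma I$ ($t>0$) with $(S,E,I,R)(0)=(\tilde S,\tilde E,\tilde I,\tilde R)$. *)

theory Defs
  imports "HOL-Analysis.Analysis"
begin

definition seir_phi :: "(real \<Rightarrow> real) \<Rightarrow> real \<Rightarrow> real \<Rightarrow> real" where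
  "seir_phi psi u0 u = integral {u..u0} (\<lambda>\<xi>. 1 / (\<xi> * psi \<xi>))"

definition seir_phi_inv :: "(real \<Rightarrow> real) \<Rightarrow> real \<Rightarrow> real \<Rightarrow> real \<Rightarrow> real" where
  "seir_phi_inv psi uinf u0 t = inv_into {uinf<..u0} (seir_phi psi u0) t"

definition seir_S :: "real \<Rightarrow> real \<Rightarrow> real \<Rightarrow> real \<Rightarrow> real \<Rightarrow> real \<Rightarrow> real \<Rightarrow>
    (real \<Rightarrow> real) \<Rightarrow> real \<Rightarrow> real \<Rightarrow> real" where
  "seir_S \<beta> \<gamma> \<delta> St Et It Rt psi uinf t =
     St * exp ((\<beta>/\<gamma>) * Rt) * seir_phi_inv psi uinf (exp (-(\<beta>/\<gamma>) * Rt)) t"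

definition seir_E :: "real \<Rightarrow> real \<Rightarrow> real \<Rightarrow> real \<Rightarrow> real \<Rightarrow> real \<Rightarrow> real \<Rightarrow>
    (real \<Rightarrow> real) \<Rightarrow> real \<Rightarrow> real \<Rightarrow> real" where
  "seir_E \<beta> \<gamma> \<delta> St Et It Rt psi uinf t =
     (let u0 = exp (-(\<beta>/\<gamma>) * Rt) in
      Et * exp (-\<delta> * t) + St * exp ((\<beta>/\<gamma>) * Rt) * exp (-\<delta> * t) *
        integral {seir_phi_inv psi uinf u0 t..u0} (\<lambda>v. exp (\<delta> * seir_phi psi u0 v)))"

definition seir_I :: "real \<Rightarrow> real \<Rightarrow> real \<Rightarrow> real \<Rightarrow> real \<Rightarrow> real \<Rightarrow> real \<Rightarrow>
    (real \<Rightarrow> real) \<Rightarrow> real \<Rightarrow> real \<Rightarrow> real" where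
  "seir_I \<beta> \<gamma> \<delta> St Et It Rt psi uinf t =
     (let u0 = exp (-(\<beta>/\<gamma>) * Rt); N = St + Et + It + Rt in
      N - St * exp ((\<beta>/\<gamma>) * Rt) * seir_phi_inv psi uinf u0 t
        + (\<gamma>/\<beta>) * ln (seir_phi_inv psi uinf u0 t)
        - seir_E \<beta> \<gamma> \<delta> St Et It Rt psi uinf t)"

definition seir_R :: "real \<Rightarrow> real \<Rightarrow> real \<Rightarrow> real \<Rightarrow> real \<Rightarrow> real \<Rightarrow> real \<Rightarrow>
    (real \<Rightarrow> real) \<Rightarrow> real \<Rightarrow> real \<Rightarrow> real" where
  "seir_R \<beta> \<gamma> \<delta> St Et It Rt psi uinf t =
     - (\<gamma>/\<beta>) * ln (seir_phi_inv psi uinf (exp (-(\<beta>/\<gamma>) * Rt)) t)"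

end

theory Submission
  imports Defs
begin

lemma int_deriv_at:
  fixes g :: "real \<Rightarrow> real"
  assumes "continuous_on {a..b} g" "a < t" "t < b"
  shows "((\<lambda>x. integral {x..b} g) has_real_derivative - g t) (at t)"
proof -
  have "((\<lambda>x. integral {x..b} g) has_real_derivative - g t) (at t within {a..b})"
    by (rule integral_has_real_derivative'[OF assms(1)]) (use assms in auto)
  then have d: "((\<lambda>x. integral {x..b} g) has_real_derivative - g t) (at t within {a<..<b})"
    by (rule has_field_derivative_subset) auto
  have e: "at t within {a<..<b} = at t" by (rule at_within_open) (use assms in auto)
  show ?thesis using d unfolding e .
qed

lemma int_cont:
  fixes g :: "real \<Rightarrow> real"
  assumes "continuous_on {a..b} g"
  shows "continuous_on {a..b} (\<lambda>x. integral {x..b} g)"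
  using indefinite_integral_continuous_1'[OF integrable_continuous_real[OF assms]] .

lemma int_pos_strict:
  fixes g :: "real \<Rightarrow> real"
  assumes "continuous_on {a..b} g" "a < b" "\<And>x. x \<in> {a..b} \<Longrightarrow> g x > 0"
  shows "integral {a..b} g > 0"
proof -
  have "integral {a..b} (\<lambda>_. 0::real) < integral {a..b} g"
    by (rule integral_less_real) (use assms in auto)
  then show ?thesis by simp
qed

lemma int_split:
  fixes g :: "real \<Rightarrow> real"
  assumes "continuous_on {a..b} g" "a \<le> c" "c \<le> b"
  shows "integral {a..b} g = integral {a..c} g + integral {c..b} g"
  using Henstock_Kurzweil_Integration.integral_combine[OF assms(2,3) integrable_continuous_real[OF assms(1)]] by simp

theorem theorem5:
  fixes \<beta> \<gamma> \<delta> St Et It Rt \<alpha> :: real and \<psi> :: "real \<Rightarrow> real"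
  defines "N \<equiv> St + Et + It + Rt"
  defines "u0 \<equiv> exp (-(\<beta>/\<gamma>) * Rt)"
  defines "uinf \<equiv> exp (-(\<beta>/\<gamma>) * \<alpha>)"
  defines "Sh \<equiv> (\<lambda>u. seir_S \<beta> \<gamma> \<delta> St Et It Rt \<psi> uinf (seir_phi \<psi> u0 u))"
  defines "Eh \<equiv> (\<lambda>u. seir_E \<beta> \<gamma> \<delta> St Et It Rt \<psi> uinf (seir_phi \<psi> u0 u))"
  defines "Ih \<equiv> (\<lambda>u. seir_I \<beta> \<gamma> \<delta> St Et It Rt \<psi> uinf (seir_phi \<psi> u0 u))"
  defines "Rh \<equiv> (\<lambda>u. seir_R \<beta> \<gamma> \<delta> St Et It Rt \<psi> uinf (seir_phi \<psi> u0 u))"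
  assumes pos: "\<beta> > 0" "\<gamma> > 0" "\<delta> > 0"
    and N_pos: "N > 0"
    and A1: "It > 0"
    and A2: "Et > (\<gamma>/\<delta>) * It"
    and A3: "St > \<delta> * Et / (\<beta> * It)"
    and A4: "Rt \<ge> 0" "N > St * exp ((\<beta>/\<gamma>) * Rt) + Rt"
    and alpha: "Rt < \<alpha>" "\<alpha> < N"
      "\<alpha> = N - St * exp ((\<beta>/\<gamma>) * Rt) * exp (-(\<beta>/\<gamma>) * \<alpha>)"
    and A5: "St < (\<gamma>/\<beta>) * exp ((\<beta>/\<gamma>) * (\<alpha> - Rt))"
    and psi_cont: "continuous_on {uinf<..u0} \<psi>"
    and psi_pos: "\<forall>u\<in>{uinf<..u0}. \<psi> u > 0"
    and psi_C1: "\<exists>\<psi>'. continuous_on {uinf<..<u0} \<psi>' \<and>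
                   (\<forall>u\<in>{uinf<..<u0}. (\<psi> has_real_derivative \<psi>' u) (at u) \<and>
                      \<psi>' u * \<psi> u - (\<gamma> + \<delta>) / u * \<psi> u =
                        - \<delta> * (\<beta> * N - \<beta> * St * exp ((\<beta>/\<gamma>) * Rt) * u + \<gamma> * ln u) / u)"
    and psi_init: "\<psi> u0 = \<beta> * It"
  shows "(\<forall>u\<in>{uinf<..<u0}.
            (Sh has_real_derivative Sh u / u) (at u) \<and>
            (\<exists>D. (Eh has_real_derivative D) (at u) \<and> D - \<delta> / (u * \<psi> u) * Eh u = - Sh u / u) \<and>
            (\<exists>D. (Ih has_real_derivative D) (at u) \<and> D - (\<gamma>/\<beta>) * (1/u) = - \<delta> / (u * \<psi> u) * Eh u) \<and>
            (Rh has_real_derivative - (\<gamma>/\<beta>) * (1/u)) (at u))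
         \<and> Sh u0 = St \<and> Eh u0 = Et \<and> Ih u0 = It \<and> Rh u0 = Rt"
proof -
  define f where "f = (\<lambda>\<xi>::real. 1 / (\<xi> * \<psi> \<xi>))"
  define P where "P = seir_phi \<psi> u0"
  define Q where "Q = seir_phi_inv \<psi> uinf u0"
  define C where "C = St * exp ((\<beta>/\<gamma>) * Rt)"
  define J where "J = (\<lambda>x. integral {x..u0} (\<lambda>v. exp (\<delta> * P v)))"
  define EE where "EE = (\<lambda>x. Et * exp (-\<delta> * P x) + C * exp (-\<delta> * P x) * J x)"
  have uinf_pos: "0 < uinf" unfolding uinf_def by simp
  have bg: "\<beta>/\<gamma> > 0" using pos by simp
  have "\<beta> * Rt < \<beta> * \<alpha>" using pos alpha(1) by simp
  then have "\<beta> * Rt / \<gamma> < \<beta> * \<alpha> / \<gamma>" using pos by (simp add: divide_strict_right_mono)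
  then have "-(\<beta>/\<gamma>) * \<alpha> < -(\<beta>/\<gamma>) * Rt" by simp
  then have ul: "uinf < u0" unfolding uinf_def u0_def by simp
  have fpos: "f x > 0" if "x \<in> {uinf<..u0}" for x
    using psi_pos that uinf_pos unfolding f_def by auto
  have fcont: "continuous_on {a..u0} f" if "uinf < a" for a
  proof -
    have c: "continuous_on {a..u0} \<psi>"
      by (rule continuous_on_subset[OF psi_cont]) (use that in auto)
    have nz: "\<forall>\<xi>\<in>{a..u0}. \<xi> * \<psi> \<xi> \<noteq> 0"
    proof
      fix \<xi> assume "\<xi> \<in> {a..u0}"
      then have x: "\<xi> \<in> {uinf<..u0}" using that by auto
      then have "\<psi> \<xi> > 0" using psi_pos by blast
      moreover have "\<xi> > 0" using x uinf_pos by auto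
      ultimately show "\<xi> * \<psi> \<xi> \<noteq> 0" by simp
    qed
    show ?thesis unfolding f_def
      by (intro continuous_intros c nz)
  qed
  have Pdef: "P = (\<lambda>x. integral {x..u0} f)" unfolding P_def f_def seir_phi_def by simp
  have mono: "P y < P x" if "uinf < x" "x < y" "y \<le> u0" for x y
  proof -
    have "P x = integral {x..y} f + P y" unfolding Pdef
      by (rule int_split[OF fcont]) (use that in auto)
    moreover have "integral {x..y} f > 0"
      by (rule int_pos_strict) (use that fcont[of x] fpos in \<open>auto intro: continuous_on_subset\<close>)
    ultimately show ?thesis by simp
  qed
  have inj: "inj_on P {uinf<..u0}"
    unfolding inj_on_def
    by (metis greaterThanAtMost_iff linorder_neq_iff mono less_irrefl)
  have QP: "Q (P x) = x" if "x \<in> {uinf<..u0}" for x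
    unfolding Q_def seir_phi_inv_def P_def[symmetric] by (rule inv_into_f_f[OF inj that])
  have P0: "P u0 = 0" unfolding Pdef by simp
  have Sh_eq: "Sh x = C * x" if "x \<in> {uinf<..u0}" for x
    unfolding Sh_def seir_S_def u0_def[symmetric] P_def[symmetric] Q_def[symmetric] C_def
    using QP[OF that] by simp
  have Rh_eq: "Rh x = -(\<gamma>/\<beta>) * ln x" if "x \<in> {uinf<..u0}" for x
    unfolding Rh_def seir_R_def u0_def[symmetric] P_def[symmetric] Q_def[symmetric]
    using QP[OF that] by simp
  have Eh_eq: "Eh x = EE x" if "x \<in> {uinf<..u0}" for x
    unfolding Eh_def seir_E_def u0_def[symmetric] P_def[symmetric] Q_def[symmetric] Let_def EE_def J_def C_def
    using QP[OF that] by simp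
  have Ih_eq: "Ih x = N - C * x + (\<gamma>/\<beta>) * ln x - EE x" if "x \<in> {uinf<..u0}" for x
    unfolding Ih_def seir_I_def u0_def[symmetric] P_def[symmetric] Q_def[symmetric] Let_def N_def[symmetric]
    using QP[OF that] Eh_eq[OF that] C_def unfolding Eh_def u0_def[symmetric] P_def[symmetric] by simp
  have opn: "open {uinf<..<u0}" by simp
  have derivs: "(Sh has_real_derivative Sh u / u) (at u) \<and>
            (\<exists>D. (Eh has_real_derivative D) (at u) \<and> D - \<delta> / (u * \<psi> u) * Eh u = - Sh u / u) \<and>
            (\<exists>D. (Ih has_real_derivative D) (at u) \<and> D - (\<gamma>/\<beta>) * (1/u) = - \<delta> / (u * \<psi> u) * Eh u) \<and>
            (Rh has_real_derivative - (\<gamma>/\<beta>) * (1/u)) (at u)" if u: "u \<in> {uinf<..<u0}" for u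
  proof -
    define a where "a = (uinf + u) / 2"
    have a: "uinf < a" "a < u" "u < u0" using u unfolding a_def by auto
    have upos: "u > 0" using a uinf_pos by simp
    have dP: "(P has_real_derivative - f u) (at u)" unfolding Pdef
      by (rule int_deriv_at[OF fcont]) (use a in auto)
    have Pc: "continuous_on {a..u0} P" unfolding Pdef by (rule int_cont[OF fcont]) (use a in auto)
    have gc: "continuous_on {a..u0} (\<lambda>v. exp (\<delta> * P v))" by (intro continuous_intros Pc)
    have dJ: "(J has_real_derivative - exp (\<delta> * P u)) (at u)" unfolding J_def
      by (rule int_deriv_at[OF gc]) (use a in auto)
    have sub: "x \<in> {uinf<..u0}" if "x \<in> {uinf<..<u0}" for x using that by auto
    have dS: "(Sh has_real_derivative C) (at u)"
      by (rule has_field_derivative_transform_within_open[OF _ opn u, of "\<lambda>x. C * x"])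
         (auto intro!: derivative_eq_intros simp: Sh_eq[OF sub])
    have dR: "(Rh has_real_derivative - (\<gamma>/\<beta>) * (1/u)) (at u)"
      by (rule has_field_derivative_transform_within_open[OF _ opn u, of "\<lambda>x. -(\<gamma>/\<beta>) * ln x"])
         (use upos pos in \<open>auto intro!: derivative_eq_intros simp: Rh_eq[OF sub]\<close>)
    define DE where "DE = Et * (exp (-\<delta> * P u) * (\<delta> * f u)) + C * (exp (-\<delta> * P u) * (\<delta> * f u) * J u - 1)"
    have dEE: "(EE has_real_derivative DE) (at u)"
    proof -
      have e1: "((\<lambda>z. exp (-\<delta> * P z)) has_real_derivative exp (-\<delta> * P u) * (-\<delta> * (- f u))) (at u)"
        by (rule DERIV_fun_exp[OF DERIV_cmult[OF dP]])
      have EEe: "EE = (\<lambda>x. Et * exp (-\<delta> * P x) + C * (exp (-\<delta> * P x) * J x))"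
        unfolding EE_def by (simp add: fun_eq_iff)
      have "(EE has_real_derivative Et * (exp (-\<delta> * P u) * (-\<delta> * (- f u))) +
          C * ((exp (-\<delta> * P u) * (-\<delta> * (- f u))) * J u + (- exp (\<delta> * P u)) * exp (-\<delta> * P u))) (at u)"
        unfolding EEe by (rule DERIV_add[OF DERIV_cmult[OF e1] DERIV_cmult[OF DERIV_mult[OF e1 dJ]]])
      moreover have "exp (-\<delta> * P u) * exp (\<delta> * P u) = 1" by (simp add: exp_add[symmetric])
      ultimately show ?thesis unfolding DE_def by (simp add: algebra_simps)
    qed
    have dE: "(Eh has_real_derivative DE) (at u)"
      by (rule has_field_derivative_transform_within_open[OF dEE opn u]) (rule Eh_eq[OF sub, symmetric])
    have dI0: "((\<lambda>x. N - C * x + (\<gamma>/\<beta>) * ln x - EE x) has_real_derivative - C + (\<gamma>/\<beta>) * (1/u) - DE) (at u)"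
      using upos pos by (auto intro!: derivative_eq_intros dEE simp: field_simps)
    have dI: "(Ih has_real_derivative - C + (\<gamma>/\<beta>) * (1/u) - DE) (at u)"
      by (rule has_field_derivative_transform_within_open[OF dI0 opn u]) (rule Ih_eq[OF sub, symmetric])
    have Su: "Sh u = C * u" using Sh_eq[OF sub[OF u]] .
    have Eu: "Eh u = EE u" using Eh_eq[OF sub[OF u]] .
    have fu: "\<delta> / (u * \<psi> u) = \<delta> * f u" unfolding f_def by simp
    have fu2: "- \<delta> / (u * \<psi> u) = - (\<delta> * f u)" unfolding f_def by simp
    have k1: "DE - \<delta> / (u * \<psi> u) * Eh u = - Sh u / u"
      unfolding fu Eu Su DE_def EE_def using upos by (simp add: algebra_simps)
    have k2: "(- C + (\<gamma>/\<beta>) * (1/u) - DE) - (\<gamma>/\<beta>) * (1/u) = - \<delta> / (u * \<psi> u) * Eh u"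
      unfolding fu2 Eu DE_def EE_def by (simp add: algebra_simps)
    have "Sh u / u = C" using Su upos by simp
    then have dS': "(Sh has_real_derivative Sh u / u) (at u)" using dS by simp
    show ?thesis using dS' dR dE dI k1 k2 by blast
  qed
  have u0in: "u0 \<in> {uinf<..u0}" using ul by simp
  have Q0: "Q 0 = u0" using QP[OF u0in] P0 by simp
  have lnu0: "ln u0 = -(\<beta>/\<gamma>) * Rt" unfolding u0_def by simp
  have EE0: "EE u0 = Et" unfolding EE_def J_def P0 by simp
  have "Sh u0 = St" using Sh_eq[OF u0in] unfolding C_def u0_def by (simp add: exp_add[symmetric])
  moreover have "Eh u0 = Et" using Eh_eq[OF u0in] EE0 by simp
  moreover have "Ih u0 = It" using Ih_eq[OF u0in] EE0 \<open>Sh u0 = St\<close> Sh_eq[OF u0in] lnu0 pos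
    unfolding N_def by simp
  moreover have "Rh u0 = Rt" using Rh_eq[OF u0in] lnu0 pos by simp
  ultimately show ?thesis using derivs by blast
qed

end
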